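(* Let $n\ge 1$ and $m\ge 2$ be integers with $m\nmid n$, and let $\ell=\lfloor n/m\rfloor$. Then $k=\ell+1$ is the smallest nonnegative integer $k$ for which $\theta_{m,k}=\mathbf{0}$ (the map sending every $x\in\mathbb{F}_2^n$ to the zero vector).
   Context: For $x=(x_0,\dots,x_{n-1})\in\mathbb{F}_2^n$, indices of coordinates are taken modulo $n$. For a nonnegative integer $k$, the map $\theta_{m,k}\colon\mathbb{F}_2^n\to\mathbb{F}_2^n$ is defined by $\theta_{m,k}(x)=y$ with $y_i=x_{i+mk}\prod_{1\le j\le mk-1,\ m\nmid j}(x_{i+j}+1)$ for $i\in\{0,\dots,n-1\}$ (for $k=0$ the empty product is $1$, so $\theta_{m,0}$ is the identity map). *)

theory Defs
  imports Main "HOL-Library.Z2"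
begin

text \<open>Vectors of F_2^n are represented as functions x :: nat => bit, where only
  the coordinates 0..n-1 are relevant; coordinate indices are read modulo n.\<close>

definition theta :: "nat \<Rightarrow> nat \<Rightarrow> nat \<Rightarrow> (nat \<Rightarrow> bit) \<Rightarrow> (nat \<Rightarrow> bit)" where
  "theta n m k x = (\<lambda>i. x ((i + m * k) mod n) *
      (\<Prod>j\<in>{j. 1 \<le> j \<and> j \<le> m * k - 1 \<and> \<not> m dvd j}. x ((i + j) mod n) + 1))"

definition theta_zero :: "nat \<Rightarrow> nat \<Rightarrow> nat \<Rightarrow> bool" where
  "theta_zero n m k = (\<forall>x::nat \<Rightarrow> bit. \<forall>i<n. theta n m k x i = 0)"

end

theory Submission
  imports Defs
begin

lemma bit_xx1: "(a::bit) * (a + 1) = 0"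
  by (cases "a = 0") (auto simp: bit_not_zero_iff)

theorem corollary1:
  fixes n m :: nat
  assumes "n \<ge> 1" and "m \<ge> 2" and "\<not> m dvd n"
  shows "theta_zero n m (n div m + 1) \<and> (\<forall>k < n div m + 1. \<not> theta_zero n m k)"
proof
  define l where "l = n div m"
  define r where "r = n mod m"
  have r0: "r > 0" using assms(3) r_def by (simp add: dvd_eq_mod_eq_0)
  have rm: "r < m" using assms(2) r_def by simp
  have nd: "n = m * l + r" using l_def r_def by simp
  show "theta_zero n m (n div m + 1)"
    unfolding theta_zero_def
  proof (intro allI impI)
    fix x :: "nat \<Rightarrow> bit" and i assume "i < n"
    define j0 where "j0 = m - r"
    define S where "S = {j. 1 \<le> j \<and> j \<le> m * (n div m + 1) - 1 \<and> \<not> m dvd j}"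
    have fin: "finite S" unfolding S_def by (rule finite_subset[of _ "{..m * (n div m + 1)}"]) auto
    have "m * (n div m + 1) = n + j0" using nd rm l_def j0_def by (simp add: algebra_simps)
    hence eq: "(i + m * (n div m + 1)) mod n = (i + j0) mod n"
      by (metis add.commute add.left_commute mod_add_self2)
    have j0S: "j0 \<in> S" unfolding S_def j0_def using r0 rm nd l_def
      by (auto simp: algebra_simps dest: dvd_imp_le)
    have "theta n m (n div m + 1) x i = x ((i + j0) mod n) * ((x ((i + j0) mod n) + 1) *
        (\<Prod>j\<in>S - {j0}. x ((i + j) mod n) + 1))"
      unfolding theta_def S_def[symmetric] eq prod.remove[OF fin j0S] by (rule refl)
    also have "\<dots> = 0" by (simp only: mult.assoc[symmetric] bit_xx1 mult_zero_left)
    finally show "theta n m (n div m + 1) x i = 0" .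
  qed
  show "\<forall>k < n div m + 1. \<not> theta_zero n m k"
  proof (intro allI impI)
    fix k assume "k < n div m + 1"
    hence "m * k \<le> m * l" using l_def by simp
    hence mk: "m * k < n" using nd r0 by linarith
    define x :: "nat \<Rightarrow> bit" where "x = (\<lambda>t. if t = m * k then 1 else 0)"
    have "theta n m k x 0 = 1"
      unfolding theta_def x_def using mk
      by (auto intro!: prod.neutral)
    thus "\<not> theta_zero n m k" unfolding theta_zero_def using mk by force
  qed
qed

end
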